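(* Let $K$ be a compact space such that any two points of $K$ are contained in a separable connected compact subset of $K$. If $K$ is almost totally disconnected, then $K$ is homeomorphic to a subspace of $\Sigma[0,1]^\Gamma$ for some set $\Gamma$.
   Context: For a set $\Gamma$, $\Sigma[0,1]^\Gamma$ is the subspace of $[0,1]^\Gamma$ (product topology) of points with countable support, and $\Sigma_0^1[0,1]^\Gamma$ is the subspace of $[0,1]^\Gamma$ consisting of those $x$ with $x_\gamma\in\{0,1\}$ for all but countably many $\gamma$. A compact space is almost totally disconnected if it is homeomorphic to a subspace of $\Sigma_0^1[0,1]^\Gamma$ for some set $\Gamma$. *)

theory Defs
  imports "HOL-Analysis.Analysis"
begin

text \<open>The cube [0,1]^Gamma with the product topology (points are extensional
  functions on Gamma).\<close>
definition cube_top :: "'g set \<Rightarrow> ('g \<Rightarrow> real) topology" where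
  "cube_top \<Gamma> = product_topology (\<lambda>_. top_of_set {0..1}) \<Gamma>"

definition Sigma_cube :: "'g set \<Rightarrow> ('g \<Rightarrow> real) set" where
  "Sigma_cube \<Gamma> = {x \<in> topspace (cube_top \<Gamma>). countable {\<gamma>\<in>\<Gamma>. x \<gamma> \<noteq> 0}}"

definition Sigma01_cube :: "'g set \<Rightarrow> ('g \<Rightarrow> real) set" where
  "Sigma01_cube \<Gamma> = {x \<in> topspace (cube_top \<Gamma>). countable {\<gamma>\<in>\<Gamma>. x \<gamma> \<notin> {0,1}}}"

definition almost_totally_disconnected :: "'a topology \<Rightarrow> 'g itself \<Rightarrow> bool" where
  "almost_totally_disconnected X _ \<longleftrightarrow> compact_space X \<and>
     (\<exists>(\<Gamma>::'g set) S. S \<subseteq> Sigma01_cube \<Gamma> \<and>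
        X homeomorphic_space subtopology (cube_top \<Gamma>) S)"

end

theory Submission
  imports Defs
begin

lemma coord_cont:
  assumes h: "continuous_map X (subtopology (cube_top \<Gamma>) S) h" and g: "\<gamma> \<in> \<Gamma>"
  shows "continuous_map X euclideanreal (\<lambda>z. h z \<gamma>)"
proof -
  have "continuous_map X (cube_top \<Gamma>) h" using h continuous_map_into_fulltopology by blast
  then have "continuous_map X (top_of_set {0..1}) (\<lambda>z. h z \<gamma>)"
    unfolding cube_top_def using continuous_map_product_projection[OF g]
    continuous_map_compose[of X _ h] by (fastforce simp: o_def)
  then show ?thesis using continuous_map_into_fulltopology by blast
qed

lemma key_countable:
  assumes h: "continuous_map X (subtopology (cube_top \<Gamma>) S) h"
    and S: "S \<subseteq> Sigma01_cube \<Gamma>"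
    and x: "x \<in> topspace X" and y: "y \<in> topspace X"
    and C: "C \<subseteq> topspace X" "x \<in> C" "y \<in> C" "connectedin X C" "separable_space (subtopology X C)"
  shows "countable {\<gamma>\<in>\<Gamma>. h x \<gamma> \<noteq> h y \<gamma>}"
proof -
  obtain D where D: "countable D" "D \<subseteq> C" "subtopology X C closure_of D = C"
    using C(5) C(1) unfolding separable_space_def by (auto simp: Int_absorb1)
  have hS: "\<And>z. z \<in> topspace X \<Longrightarrow> h z \<in> S \<and> h z \<in> topspace (cube_top \<Gamma>)"
    using h by (auto simp: continuous_map_def)
  define A where "A = (\<Union>d\<in>D. {\<gamma>\<in>\<Gamma>. h d \<gamma> \<notin> {0,1}})"
  have "countable A" unfolding A_def
  proof (rule countable_UN[OF D(1)])
    fix d assume "d \<in> D"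
    then have "d \<in> topspace X" using D C by blast
    then show "countable {\<gamma>\<in>\<Gamma>. h d \<gamma> \<notin> {0,1}}" using hS S unfolding Sigma01_cube_def by blast
  qed
  moreover have "{\<gamma>\<in>\<Gamma>. h x \<gamma> \<noteq> h y \<gamma>} \<subseteq> A"
  proof
    fix \<gamma> assume "\<gamma> \<in> {\<gamma>\<in>\<Gamma>. h x \<gamma> \<noteq> h y \<gamma>}"
    then have g: "\<gamma> \<in> \<Gamma>" and ne: "h x \<gamma> \<noteq> h y \<gamma>" by auto
    show "\<gamma> \<in> A"
    proof (rule ccontr)
      assume nA: "\<gamma> \<notin> A"
      define q where "q = (\<lambda>z. h z \<gamma>)"
      have qc: "continuous_map X euclideanreal q" unfolding q_def using coord_cont[OF h g] .
      define T where "T = {z \<in> topspace X. q z \<in> {0,1}}"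
      have "closedin X T" unfolding T_def
        by (rule closedin_continuous_map_preimage[OF qc]) auto
      moreover have "D \<subseteq> T" using nA D C g unfolding T_def A_def q_def by blast
      ultimately have "X closure_of D \<subseteq> T" by (simp add: closure_of_minimal)
      then have CT: "C \<subseteq> T" using D(3) closure_of_subtopology_subset[of X C D] by blast
      have "connected (q ` C)"
        using connectedin_continuous_map_image[OF qc C(4)] by simp
      moreover have qx: "q x \<in> {0,1}" "q y \<in> {0,1}" using CT C unfolding T_def by auto
      moreover have "q x \<noteq> q y" using ne unfolding q_def by auto
      ultimately have "0 \<in> q ` C" "1 \<in> q ` C" using C(2,3) by (metis empty_iff imageI insert_iff)+
      then have "{0..1} \<subseteq> q ` C"
        using connected_contains_Icc[OF \<open>connected (q ` C)\<close>] by blast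
      then have "1/2 \<in> q ` C" by auto
      then show False using CT unfolding T_def by auto
    qed
  qed
  ultimately show ?thesis using countable_subset by blast
qed

theorem mainTheorem4:
  fixes X :: "'a topology"
  assumes "compact_space X" and "Hausdorff_space X"
    and "\<forall>x\<in>topspace X. \<forall>y\<in>topspace X. \<exists>C. C \<subseteq> topspace X \<and> x \<in> C \<and> y \<in> C \<and>
            compactin X C \<and> connectedin X C \<and> separable_space (subtopology X C)"
    and "almost_totally_disconnected X TYPE('g)"
  shows "\<exists>(\<Gamma>::('a \<Rightarrow> real) set) S. S \<subseteq> Sigma_cube \<Gamma> \<and>
           X homeomorphic_space subtopology (cube_top \<Gamma>) S"

proof -
  obtain \<Gamma> :: "'g set" and S where S: "S \<subseteq> Sigma01_cube \<Gamma>"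
    and hom: "X homeomorphic_space subtopology (cube_top \<Gamma>) S"
    using assms(4) unfolding almost_totally_disconnected_def by blast
  obtain h k where hk: "homeomorphic_maps X (subtopology (cube_top \<Gamma>) S) h k"
    using hom unfolding homeomorphic_space_def by blast
  have hc: "continuous_map X (subtopology (cube_top \<Gamma>) S) h"
    using hk by (simp add: homeomorphic_maps_def)
  have kh: "\<And>z. z \<in> topspace X \<Longrightarrow> k (h z) = z"
    using hk by (simp add: homeomorphic_maps_def)
  have hT: "\<And>z. z \<in> topspace X \<Longrightarrow> h z \<in> topspace (cube_top \<Gamma>)"
    using hc by (auto simp: continuous_map_def)
  have hT': "\<And>z \<gamma>. z \<in> topspace X \<Longrightarrow> \<gamma> \<in> \<Gamma> \<Longrightarrow> h z \<gamma> \<in> {0..1}"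
    "\<And>z \<gamma>. z \<in> topspace X \<Longrightarrow> \<gamma> \<notin> \<Gamma> \<Longrightarrow> h z \<gamma> = undefined"
    using hT unfolding cube_top_def by (auto simp: PiE_iff extensional_def)
  define x0 where "x0 = (SOME x. x \<in> topspace X)"
  define p where "p = h x0"
  define g where "g = (\<lambda>\<gamma> z. max 0 (h z \<gamma> - p \<gamma>))"
  define g' where "g' = (\<lambda>\<gamma> z. max 0 (p \<gamma> - h z \<gamma>))"
  define \<Gamma>' where "\<Gamma>' = g ` \<Gamma> \<union> g' ` \<Gamma>"
  define e where "e = (\<lambda>z. restrict (\<lambda>f. f z) \<Gamma>')"
  have cnt: "countable {\<gamma>\<in>\<Gamma>. h z \<gamma> \<noteq> p \<gamma>}" if z: "z \<in> topspace X" for z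
  proof -
    have x0: "x0 \<in> topspace X" using z unfolding x0_def by (metis someI)
    obtain C where "C \<subseteq> topspace X" "z \<in> C" "x0 \<in> C" "connectedin X C"
      "separable_space (subtopology X C)" using assms(3) z x0 by blast
    then show ?thesis unfolding p_def using key_countable[OF hc S z x0] by blast
  qed
  have p01: "\<And>\<gamma>. \<gamma> \<in> \<Gamma> \<Longrightarrow> topspace X \<noteq> {} \<Longrightarrow> p \<gamma> \<in> {0..1}"
    unfolding p_def x0_def by (metis ex_in_conv hT'(1) someI)
  have gc: "continuous_map X (top_of_set {0..1}) f" if f: "f \<in> \<Gamma>'" for f
  proof (cases "topspace X = {}")
    case True then show ?thesis by (simp add: continuous_map_def)
  next
    case False
    obtain \<gamma> where g: "\<gamma> \<in> \<Gamma>" and fe: "f = g \<gamma> \<or> f = g' \<gamma>" using f unfolding \<Gamma>'_def by blast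
    have c: "continuous_map X euclideanreal (\<lambda>z. h z \<gamma>)" using coord_cont[OF hc g] .
    have "continuous_map X euclideanreal f"
      using fe unfolding g_def g'_def
      by (auto intro!: continuous_map_real_max continuous_map_diff c)
    moreover have "f ` topspace X \<subseteq> {0..1}"
      using fe hT'(1)[OF _ g] p01[OF g False] unfolding g_def g'_def by fastforce
    ultimately show ?thesis by (auto simp: continuous_map_in_subtopology)
  qed
  have ec: "continuous_map X (cube_top \<Gamma>') e"
    unfolding cube_top_def e_def continuous_map_componentwise
    using gc by (auto simp: extensional_def)
  have einj: "inj_on e (topspace X)"
  proof
    fix x y assume x: "x \<in> topspace X" and y: "y \<in> topspace X" and eq: "e x = e y"
    have "h x = h y"
    proof
      fix \<gamma> show "h x \<gamma> = h y \<gamma>"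
      proof (cases "\<gamma> \<in> \<Gamma>")
        case False then show ?thesis using hT'(2) x y by simp
      next
        case True
        then have "g \<gamma> \<in> \<Gamma>'" "g' \<gamma> \<in> \<Gamma>'" unfolding \<Gamma>'_def by auto
        then have "g \<gamma> x = g \<gamma> y" "g' \<gamma> x = g' \<gamma> y"
          using fun_cong[OF eq, of "g \<gamma>"] fun_cong[OF eq, of "g' \<gamma>"] unfolding e_def by auto
        then show ?thesis unfolding g_def g'_def by (auto simp: max_def split: if_splits)
      qed
    qed
    then show "x = y" using kh x y by metis
  qed
  have eS: "e ` topspace X \<subseteq> Sigma_cube \<Gamma>'"
  proof
    fix w assume "w \<in> e ` topspace X"
    then obtain z where z: "z \<in> topspace X" and w: "w = e z" by blast
    have "w \<in> topspace (cube_top \<Gamma>')" using ec z w by (auto simp: continuous_map_def)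
    moreover have "{f\<in>\<Gamma>'. w f \<noteq> 0} \<subseteq> g ` {\<gamma>\<in>\<Gamma>. h z \<gamma> \<noteq> p \<gamma>} \<union> g' ` {\<gamma>\<in>\<Gamma>. h z \<gamma> \<noteq> p \<gamma>}"
      unfolding w e_def \<Gamma>'_def g_def g'_def by (auto simp: max_def split: if_splits)
    then have "countable {f\<in>\<Gamma>'. w f \<noteq> 0}"
      using cnt[OF z] by (meson countable_Un countable_image countable_subset)
    ultimately show "w \<in> Sigma_cube \<Gamma>'" unfolding Sigma_cube_def by blast
  qed
  have "Hausdorff_space (cube_top \<Gamma>')"
    unfolding cube_top_def Hausdorff_space_product_topology
    by (simp add: Hausdorff_space_subtopology)
  then have "embedding_map X (cube_top \<Gamma>') e"
    using continuous_imp_embedding_map[OF ec assms(1) _ einj] by blast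
  then show ?thesis using eS embedding_map_imp_homeomorphic_space by blast
qed

end
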